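(* Let $X$ be an $X$-set parameter and let $G=G_1\sqcup G_2$ be the disjoint union of graphs $G_1$ and $G_2$. Then $\mathscr{X}^{\rm TAR}(G)\cong\mathscr{X}^{\rm TAR}(G_1)\,\square\,\mathscr{X}^{\rm TAR}(G_2)$, via the correspondence $S\mapsto(S\cap V(G_1),S\cap V(G_2))$.
   Context: All graphs are simple, finite, with nonempty vertex set. An $X$-set parameter is a graph parameter $X(G)$ defined as the minimum cardinality of an $X$-set of $G$, where the $X$-sets of each graph are subsets of its vertex set determined by some property satisfying: (1) supersets (within $V(G)$) of $X$-sets are $X$-sets; (2) the empty set is never an $X$-set; (3) an $X$-set of a disconnected graph is the union of an $X$-set of each component; (4) if $G$ has no isolated vertices, every set of $|V(G)|-1$ vertices is an $X$-set. The $X$-TAR graph $\mathscr{X}^{\rm TAR}(G)$ has as vertices all $X$-sets of $G$, with $S_1,S_2$ adjacent iff $|S_1\ominus S_2|=1$. $\square$ denotes the Cartesian product of graphs: $(a_1,a_2)\sim(b_1,b_2)$ iff ($a_1=b_1$ and $a_2b_2$ is an edge) or ($a_2=b_2$ and $a_1b_1$ is an edge). *)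

theory Defs
  imports Main
begin

type_synonym 'a graph = "'a set \<times> 'a set set"

definition verts :: "'a graph \<Rightarrow> 'a set" where "verts G = fst G"
definition edges :: "'a graph \<Rightarrow> 'a set set" where "edges G = snd G"

definition graph :: "'a graph \<Rightarrow> bool" where
  "graph G \<longleftrightarrow> finite (verts G) \<and> verts G \<noteq> {} \<and>
     edges G \<subseteq> {e. \<exists>u v. u \<noteq> v \<and> u \<in> verts G \<and> v \<in> verts G \<and> e = {u, v}}"

definition adj :: "'a graph \<Rightarrow> 'a \<Rightarrow> 'a \<Rightarrow> bool" where
  "adj G u v \<longleftrightarrow> {u, v} \<in> edges G"

definition reach :: "'a graph \<Rightarrow> 'a \<Rightarrow> 'a \<Rightarrow> bool" where
  "reach G = (adj G)\<^sup>*\<^sup>*"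

definition components :: "'a graph \<Rightarrow> 'a set set" where
  "components G = (\<lambda>v. {u \<in> verts G. reach G v u}) ` verts G"

definition induced :: "'a graph \<Rightarrow> 'a set \<Rightarrow> 'a graph" where
  "induced G W = (W, {e \<in> edges G. e \<subseteq> W})"

definition disconnected :: "'a graph \<Rightarrow> bool" where
  "disconnected G \<longleftrightarrow> card (components G) \<ge> 2"

definition isolated :: "'a graph \<Rightarrow> 'a \<Rightarrow> bool" where
  "isolated G v \<longleftrightarrow> v \<in> verts G \<and> (\<forall>e \<in> edges G. v \<notin> e)"

text \<open>Disjoint union (used when the vertex sets are disjoint).\<close>
definition disj_union :: "'a graph \<Rightarrow> 'a graph \<Rightarrow> 'a graph" where
  "disj_union G1 G2 = (verts G1 \<union> verts G2, edges G1 \<union> edges G2)"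

definition X_set_property :: "('a graph \<Rightarrow> 'a set \<Rightarrow> bool) \<Rightarrow> bool" where
  "X_set_property X \<longleftrightarrow> (\<forall>G. graph G \<longrightarrow>
     (\<forall>S. X G S \<longrightarrow> S \<subseteq> verts G) \<and>
     (\<forall>S T. X G S \<and> S \<subseteq> T \<and> T \<subseteq> verts G \<longrightarrow> X G T) \<and>
     \<not> X G {} \<and>
     (disconnected G \<longrightarrow> (\<forall>S. S \<subseteq> verts G \<longrightarrow>
          (X G S \<longleftrightarrow> (\<forall>C \<in> components G. X (induced G C) (S \<inter> C))))) \<and>
     ((\<forall>v \<in> verts G. \<not> isolated G v) \<longrightarrow>
          (\<forall>S. S \<subseteq> verts G \<and> card S = card (verts G) - 1 \<longrightarrow> X G S)))"

definition sym_diff :: "'a set \<Rightarrow> 'a set \<Rightarrow> 'a set" where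
  "sym_diff A B = (A - B) \<union> (B - A)"

definition TAR :: "('a graph \<Rightarrow> 'a set \<Rightarrow> bool) \<Rightarrow> 'a graph \<Rightarrow> 'a set graph" where
  "TAR X G = ({S. X G S},
     {{S1, S2} | S1 S2. X G S1 \<and> X G S2 \<and> card (sym_diff S1 S2) = 1})"

definition cart_prod :: "'b graph \<Rightarrow> 'c graph \<Rightarrow> ('b \<times> 'c) graph" where
  "cart_prod H1 H2 = (verts H1 \<times> verts H2,
     {{(a1, a2), (b1, b2)} | a1 a2 b1 b2.
        a1 \<in> verts H1 \<and> b1 \<in> verts H1 \<and> a2 \<in> verts H2 \<and> b2 \<in> verts H2 \<and>
        ((a1 = b1 \<and> {a2, b2} \<in> edges H2) \<or> (a2 = b2 \<and> {a1, b1} \<in> edges H1))})"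

definition iso_via :: "('b \<Rightarrow> 'c) \<Rightarrow> 'b graph \<Rightarrow> 'c graph \<Rightarrow> bool" where
  "iso_via f H K \<longleftrightarrow> bij_betw f (verts H) (verts K) \<and>
     (\<forall>u \<in> verts H. \<forall>v \<in> verts H. {u, v} \<in> edges H \<longleftrightarrow> {f u, f v} \<in> edges K)"

end

theory Submission
  imports Defs
begin

lemma edge_sub:
  assumes "graph G" "e \<in> edges G" shows "e \<subseteq> verts G"
  using assms unfolding graph_def by blast

lemma reach_sub:
  assumes "graph G" "reach G v u" "v \<in> verts G" shows "u \<in> verts G"
  using assms(2,3) unfolding reach_def
proof (induction rule: rtranclp_induct)
  case base then show ?case by simp
next
  case (step y z)
  then show ?case using edge_sub[OF assms(1)] unfolding adj_def by blast
qed

lemma X_sub: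
  assumes "X_set_property X" "graph G" "X G S" shows "S \<subseteq> verts G"
proof -
  note H = mp[OF spec[OF assms(1)[unfolded X_set_property_def], of G] assms(2)]
  show ?thesis using conjunct1[OF H] assms(3) by blast
qed

lemma X_disc:
  assumes "X_set_property X" "graph G" "disconnected G" "S \<subseteq> verts G"
  shows "X G S \<longleftrightarrow> (\<forall>C \<in> components G. X (induced G C) (S \<inter> C))"
proof -
  note H = mp[OF spec[OF assms(1)[unfolded X_set_property_def], of G] assms(2)]
  note H4 = conjunct1[OF conjunct2[OF conjunct2[OF conjunct2[OF H]]]]
  show ?thesis using spec[OF mp[OF H4 assms(3)], of S] assms(4) by blast
qed

lemma X_comp:
  assumes X: "X_set_property X" and g: "graph G"
  shows "X G S \<longleftrightarrow> S \<subseteq> verts G \<and> (\<forall>C\<in>components G. X (induced G C) (S \<inter> C))"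
proof (cases "disconnected G")
  case True
  then show ?thesis using X_disc[OF X g True] X_sub[OF X g] by blast
next
  case False
  have fin: "finite (components G)" using g unfolding components_def graph_def by simp
  have ne: "components G \<noteq> {}" using g unfolding components_def graph_def by simp
  have "card (components G) \<noteq> 0" using fin ne by simp
  with False have "card (components G) = 1" unfolding disconnected_def by linarith
  then obtain C where C: "components G = {C}" using card_1_singletonE by blast
  have "verts G \<subseteq> C"
  proof
    fix u assume u: "u \<in> verts G"
    have "{w \<in> verts G. reach G u w} \<in> components G" using u unfolding components_def by blast
    then have "{w \<in> verts G. reach G u w} = C" using C by blast
    moreover have "u \<in> {w \<in> verts G. reach G u w}" using u unfolding reach_def by simp
    ultimately show "u \<in> C" by blast
  qed
  moreover have "C \<subseteq> verts G" using C unfolding components_def by blast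
  ultimately have CV: "C = verts G" by blast
  have ee: "{e \<in> edges G. e \<subseteq> verts G} = edges G" using edge_sub[OF g] by blast
  have ind: "induced G C = G" unfolding CV induced_def ee
    by (simp add: verts_def edges_def)
  have sub: "X G S \<Longrightarrow> S \<subseteq> verts G" using X_sub[OF X g] by blast
  have "X G S \<longleftrightarrow> S \<subseteq> verts G \<and> X G (S \<inter> verts G)"
    using sub by (metis Int_absorb2)
  then show ?thesis using C ind CV by simp
qed

lemma X_union:
  assumes X: "X_set_property X" and g1: "graph G1" and g2: "graph G2"
    and d: "verts G1 \<inter> verts G2 = {}"
  shows "X (disj_union G1 G2) S \<longleftrightarrow> S \<subseteq> verts G1 \<union> verts G2 \<and> X G1 (S \<inter> verts G1) \<and> X G2 (S \<inter> verts G2)"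
proof -
  let ?G = "disj_union G1 G2"
  have vG: "verts ?G = verts G1 \<union> verts G2" and eG: "edges ?G = edges G1 \<union> edges G2"
    unfolding disj_union_def verts_def edges_def by simp_all
  have g: "graph ?G"
  proof -
    have "finite (verts ?G)" "verts ?G \<noteq> {}" using g1 g2 unfolding graph_def vG by auto
    moreover have "edges ?G \<subseteq> {e. \<exists>u v. u \<noteq> v \<and> u \<in> verts ?G \<and> v \<in> verts ?G \<and> e = {u, v}}"
    proof
      fix e assume "e \<in> edges ?G"
      then have "e \<in> edges G1 \<or> e \<in> edges G2" unfolding eG by simp
      then obtain u v where "u \<noteq> v" "u \<in> verts G1 \<union> verts G2" "v \<in> verts G1 \<union> verts G2" "e = {u, v}"
        using g1 g2 unfolding graph_def by blast
      then show "e \<in> {e. \<exists>u v. u \<noteq> v \<and> u \<in> verts ?G \<and> v \<in> verts ?G \<and> e = {u, v}}"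
        unfolding vG by blast
    qed
    ultimately show ?thesis unfolding graph_def by blast
  qed
  have ne1: "e \<noteq> {}" if e: "e \<in> edges G1" for e
  proof -
    obtain u v where "e = {u, v}" using g1 e unfolding graph_def by blast
    then show ?thesis by simp
  qed
  have ne2: "e \<noteq> {}" if e: "e \<in> edges G2" for e
  proof -
    obtain u v where "e = {u, v}" using g2 e unfolding graph_def by blast
    then show ?thesis by simp
  qed
  have reach1: "reach ?G v u \<longleftrightarrow> reach G1 v u" if v: "v \<in> verts G1" for u v
  proof
    assume "reach ?G v u"
    then have "reach G1 v u \<and> u \<in> verts G1" using v unfolding reach_def
    proof (induction rule: rtranclp_induct)
      case base then show ?case by simp
    next
      case (step y z)
      then have y: "y \<in> verts G1" and r: "(adj G1)\<^sup>*\<^sup>* v y" by auto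
      have "{y, z} \<in> edges G1 \<union> edges G2" using step(2) unfolding adj_def eG .
      moreover have "{y,z} \<notin> edges G2" using y d edge_sub[OF g2] by blast
      ultimately have e: "{y,z} \<in> edges G1" by blast
      then have "z \<in> verts G1" using edge_sub[OF g1] by blast
      moreover have "adj G1 y z" using e unfolding adj_def .
      ultimately show ?case using r by (meson rtranclp.rtrancl_into_rtrancl)
    qed
    then show "reach G1 v u" by simp
  next
    assume "reach G1 v u"
    then show "reach ?G v u" unfolding reach_def
      by (rule rtranclp_mono[THEN predicate2D, rotated]) (auto simp: adj_def eG)
  qed
  have reach2: "reach ?G v u \<longleftrightarrow> reach G2 v u" if v: "v \<in> verts G2" for u v
  proof
    assume "reach ?G v u"
    then have "reach G2 v u \<and> u \<in> verts G2" using v unfolding reach_def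
    proof (induction rule: rtranclp_induct)
      case base then show ?case by simp
    next
      case (step y z)
      then have y: "y \<in> verts G2" and r: "(adj G2)\<^sup>*\<^sup>* v y" by auto
      have "{y, z} \<in> edges G1 \<union> edges G2" using step(2) unfolding adj_def eG .
      moreover have "{y,z} \<notin> edges G1" using y d edge_sub[OF g1] by blast
      ultimately have e: "{y,z} \<in> edges G2" by blast
      then have "z \<in> verts G2" using edge_sub[OF g2] by blast
      moreover have "adj G2 y z" using e unfolding adj_def .
      ultimately show ?case using r by (meson rtranclp.rtrancl_into_rtrancl)
    qed
    then show "reach G2 v u" by simp
  next
    assume "reach G2 v u"
    then show "reach ?G v u" unfolding reach_def
      by (rule rtranclp_mono[THEN predicate2D, rotated]) (auto simp: adj_def eG)
  qed
  have c1: "{u \<in> verts ?G. reach ?G v u} = {u \<in> verts G1. reach G1 v u}" if "v \<in> verts G1" for v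
    by (rule set_eqI) (use reach1[OF that] reach_sub[OF g1 _ that] in \<open>auto simp: vG\<close>)
  have c2: "{u \<in> verts ?G. reach ?G v u} = {u \<in> verts G2. reach G2 v u}" if "v \<in> verts G2" for v
    by (rule set_eqI) (use reach2[OF that] reach_sub[OF g2 _ that] in \<open>auto simp: vG\<close>)
  have comps: "components ?G = components G1 \<union> components G2"
  proof -
    have "components ?G = (\<lambda>v. {u \<in> verts ?G. reach ?G v u}) ` verts G1 \<union> (\<lambda>v. {u \<in> verts ?G. reach ?G v u}) ` verts G2"
      unfolding components_def by (simp only: vG image_Un)
    also have "(\<lambda>v. {u \<in> verts ?G. reach ?G v u}) ` verts G1 = components G1"
      unfolding components_def by (rule image_cong[OF refl c1])
    also have "(\<lambda>v. {u \<in> verts ?G. reach ?G v u}) ` verts G2 = components G2"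
      unfolding components_def by (rule image_cong[OF refl c2])
    finally show ?thesis .
  qed
  have ind1: "induced ?G C = induced G1 C" if "C \<subseteq> verts G1" for C
  proof -
    have "{e \<in> edges ?G. e \<subseteq> C} = {e \<in> edges G1. e \<subseteq> C}"
      using that d edge_sub[OF g2] ne2 unfolding eG by blast
    then show ?thesis unfolding induced_def by simp
  qed
  have ind2: "induced ?G C = induced G2 C" if "C \<subseteq> verts G2" for C
  proof -
    have "{e \<in> edges ?G. e \<subseteq> C} = {e \<in> edges G2. e \<subseteq> C}"
      using that d edge_sub[OF g1] ne1 unfolding eG by blast
    then show ?thesis unfolding induced_def by simp
  qed
  have s1: "C \<subseteq> verts G1" if "C \<in> components G1" for C using that unfolding components_def by blast
  have s2: "C \<subseteq> verts G2" if "C \<in> components G2" for C using that unfolding components_def by blast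
  have A1: "(\<forall>C\<in>components G1. X (induced ?G C) (S \<inter> C)) \<longleftrightarrow> X G1 (S \<inter> verts G1)"
  proof -
    have "\<forall>C\<in>components G1. X (induced ?G C) (S \<inter> C) = X (induced G1 C) (S \<inter> verts G1 \<inter> C)"
    proof
      fix C assume C: "C \<in> components G1"
      have "S \<inter> verts G1 \<inter> C = S \<inter> C" using s1[OF C] by blast
      then show "X (induced ?G C) (S \<inter> C) = X (induced G1 C) (S \<inter> verts G1 \<inter> C)"
        using ind1[OF s1[OF C]] by simp
    qed
    then show ?thesis using X_comp[OF X g1, of "S \<inter> verts G1"] by auto
  qed
  have A2: "(\<forall>C\<in>components G2. X (induced ?G C) (S \<inter> C)) \<longleftrightarrow> X G2 (S \<inter> verts G2)"
  proof -
    have "\<forall>C\<in>components G2. X (induced ?G C) (S \<inter> C) = X (induced G2 C) (S \<inter> verts G2 \<inter> C)"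
    proof
      fix C assume C: "C \<in> components G2"
      have "S \<inter> verts G2 \<inter> C = S \<inter> C" using s2[OF C] by blast
      then show "X (induced ?G C) (S \<inter> C) = X (induced G2 C) (S \<inter> verts G2 \<inter> C)"
        using ind2[OF s2[OF C]] by simp
    qed
    then show ?thesis using X_comp[OF X g2, of "S \<inter> verts G2"] by auto
  qed
  show ?thesis using X_comp[OF X g, of S] comps A1 A2 vG by auto
qed

lemma TAR_edge:
  assumes "X G u" "X G v"
  shows "{u, v} \<in> edges (TAR X G) \<longleftrightarrow> card (sym_diff u v) = 1"
proof -
  have sd: "sym_diff a b = sym_diff b a" for a b :: "'a set" unfolding sym_diff_def by blast
  show ?thesis unfolding TAR_def edges_def using assms
    by (auto simp: doubleton_eq_iff sd)
qed

lemma cart_edge: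
  assumes "p \<in> verts H1 \<times> verts H2" "q \<in> verts H1 \<times> verts H2"
  shows "{p, q} \<in> edges (cart_prod H1 H2) \<longleftrightarrow>
    (fst p = fst q \<and> {snd p, snd q} \<in> edges H2) \<or> (snd p = snd q \<and> {fst p, fst q} \<in> edges H1)"
  using assms unfolding cart_prod_def edges_def
  by (cases p; cases q) (auto simp: doubleton_eq_iff insert_commute)

theorem proposition2p33:
  fixes X :: "'a graph \<Rightarrow> 'a set \<Rightarrow> bool" and G1 G2 :: "'a graph"
  assumes "X_set_property X"
    and "graph G1" and "graph G2"
    and "verts G1 \<inter> verts G2 = {}"
  shows "iso_via (\<lambda>S. (S \<inter> verts G1, S \<inter> verts G2))
           (TAR X (disj_union G1 G2)) (cart_prod (TAR X G1) (TAR X G2))"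
proof -
  let ?G = "disj_union G1 G2"
  let ?f = "\<lambda>S. (S \<inter> verts G1, S \<inter> verts G2)"
  note XU = X_union[OF assms]
  have vT: "verts (TAR X H) = {S. X H S}" for H unfolding TAR_def verts_def by simp
  have vC: "verts (cart_prod H1 H2) = verts H1 \<times> verts H2" for H1 H2 :: "'a set graph"
    unfolding cart_prod_def verts_def by simp
  have sub1: "X G1 A \<Longrightarrow> A \<subseteq> verts G1" for A using X_sub[OF assms(1,2)] by blast
  have sub2: "X G2 A \<Longrightarrow> A \<subseteq> verts G2" for A using X_sub[OF assms(1,3)] by blast
  have bij: "bij_betw ?f (verts (TAR X ?G)) (verts (cart_prod (TAR X G1) (TAR X G2)))"
    unfolding bij_betw_def
  proof
    show "inj_on ?f (verts (TAR X ?G))"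
      unfolding inj_on_def vT using XU by blast
    show "?f ` verts (TAR X ?G) = verts (cart_prod (TAR X G1) (TAR X G2))"
    proof
      show "?f ` verts (TAR X ?G) \<subseteq> verts (cart_prod (TAR X G1) (TAR X G2))"
        unfolding vT vC using XU by auto
      show "verts (cart_prod (TAR X G1) (TAR X G2)) \<subseteq> ?f ` verts (TAR X ?G)"
      proof
        fix p assume "p \<in> verts (cart_prod (TAR X G1) (TAR X G2))"
        then obtain A B where p: "p = (A, B)" "X G1 A" "X G2 B" unfolding vC vT by auto
        have "A \<inter> verts G2 = {}" "B \<inter> verts G1 = {}" using sub1[OF p(2)] sub2[OF p(3)] assms(4) by blast+
        then have "?f (A \<union> B) = p" using p sub1[OF p(2)] sub2[OF p(3)] by auto
        moreover have "X ?G (A \<union> B)" using XU p sub1[OF p(2)] sub2[OF p(3)] \<open>?f (A \<union> B) = p\<close> by auto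
        ultimately show "p \<in> ?f ` verts (TAR X ?G)" unfolding vT by blast
      qed
    qed
  qed
  have edge: "{u, v} \<in> edges (TAR X ?G) \<longleftrightarrow> {?f u, ?f v} \<in> edges (cart_prod (TAR X G1) (TAR X G2))"
    if u: "u \<in> verts (TAR X ?G)" and v: "v \<in> verts (TAR X ?G)" for u v
  proof -
    have Xu: "X ?G u" and Xv: "X ?G v" using u v unfolding vT by auto
    have fu: "?f u \<in> verts (TAR X G1) \<times> verts (TAR X G2)" "?f v \<in> verts (TAR X G1) \<times> verts (TAR X G2)"
      using XU Xu Xv unfolding vT by auto
    have su: "u \<subseteq> verts G1 \<union> verts G2" "v \<subseteq> verts G1 \<union> verts G2" using XU Xu Xv by auto
    let ?d1 = "sym_diff (u \<inter> verts G1) (v \<inter> verts G1)"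
    let ?d2 = "sym_diff (u \<inter> verts G2) (v \<inter> verts G2)"
    have dU: "sym_diff u v = ?d1 \<union> ?d2" using su unfolding sym_diff_def by blast
    have dd: "?d1 \<inter> ?d2 = {}" using assms(4) unfolding sym_diff_def by blast
    have fin: "finite (verts G1)" "finite (verts G2)" using assms(2,3) unfolding graph_def by auto
    have f1: "finite ?d1" using fin unfolding sym_diff_def by auto
    have f2: "finite ?d2" using fin unfolding sym_diff_def by auto
    have cU: "card (sym_diff u v) = card ?d1 + card ?d2" using dU dd f1 f2 card_Un_disjoint by metis
    have e1: "?d1 = {} \<longleftrightarrow> u \<inter> verts G1 = v \<inter> verts G1" unfolding sym_diff_def by blast
    have e2: "?d2 = {} \<longleftrightarrow> u \<inter> verts G2 = v \<inter> verts G2" unfolding sym_diff_def by blast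
    have "card (sym_diff u v) = 1 \<longleftrightarrow>
      (u \<inter> verts G1 = v \<inter> verts G1 \<and> card ?d2 = 1) \<or> (u \<inter> verts G2 = v \<inter> verts G2 \<and> card ?d1 = 1)"
    proof -
      have gen: "\<And>a b::nat. a + b = 1 \<longleftrightarrow> (a = 0 \<and> b = 1) \<or> (b = 0 \<and> a = 1)" by arith
      have z1: "card ?d1 = 0 \<longleftrightarrow> u \<inter> verts G1 = v \<inter> verts G1" using e1 f1 by simp
      have z2: "card ?d2 = 0 \<longleftrightarrow> u \<inter> verts G2 = v \<inter> verts G2" using e2 f2 by simp
      show ?thesis unfolding cU gen z1 z2 by blast
    qed
    moreover have "{u, v} \<in> edges (TAR X ?G) \<longleftrightarrow> card (sym_diff u v) = 1" using TAR_edge Xu Xv by blast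
    moreover have "{?f u, ?f v} \<in> edges (cart_prod (TAR X G1) (TAR X G2)) \<longleftrightarrow>
      (u \<inter> verts G1 = v \<inter> verts G1 \<and> card ?d2 = 1) \<or> (u \<inter> verts G2 = v \<inter> verts G2 \<and> card ?d1 = 1)"
      using cart_edge[OF fu] TAR_edge[of X G1] TAR_edge[of X G2] XU Xu Xv by auto
    ultimately show ?thesis by blast
  qed
  show ?thesis unfolding iso_via_def using bij edge by blast
qed

end
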